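(* Let $\mathcal{X},\mathcal{Y},\mathcal{U},\mathcal{Z}$ be finite sets, let $(X,Y)\in\mathcal{X}\times\mathcal{Y}$ have joint distribution $P_{X,Y}$ with $P_X$ and $P_Y$ of full support, and let $f:\mathcal{X}\times\mathcal{Y}\to\mathcal{U}$ and $g:\mathcal{Y}\to\mathcal{Z}$ be deterministic functions. Let $R^*$ be the optimal zero-error rate and $G_{[n]}$ the $n$-th characteristic graph (both defined in the context). Then $$R^*=\lim_{n\to\infty}\frac{1}{n}H_\chi(G_{[n]}).$$
   Context: Setting: $(X^n,Y^n)$ denotes $n$ i.i.d. copies of $(X,Y)$, with distribution $P^n_{X,Y}$. An encoder observes $X^n$ and $(g(Y_t))_{t\le n}$; a decoder observes $Y^n$ and must recover $(f(X_t,Y_t))_{t\le n}$. Let $\{0,1\}^*$ be the set of finite binary words and $l(\cdot)$ the length of a word. An $(n,R_n)$-zero-error source code is a pair $\phi_e:\mathcal{X}^n\times\mathcal{Z}^n\to\{0,1\}^*$, $\phi_d:\mathcal{Y}^n\times\{0,1\}^*\to\mathcal{U}^n$ such that (1) $\phi_e(\mathcal{X}^n\times\mathcal{Z}^n)$ is prefix-free; (2) $R_n=\frac1n\mathbb{E}[l(\phi_e(X^n,(g(Y_t))_{t\le n}))]$; (3) for all $(x^n,y^n)\in\operatorname{supp}P^n_{X,Y}$, $\phi_d(y^n,\phi_e(x^n,(g(y_t))_{t\le n}))=(f(x_t,y_t))_{t\le n}$. A rate $R$ is achievable if there is a sequence of $(n,R_n)$-zero-error codes with $\lim_n R_n=R$;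 $R^*=\inf\{R\ge0: R\text{ achievable}\}$. A probabilistic graph is a triple $(\mathcal{V},\mathcal{E},P_V)$ with vertex set $\mathcal{V}$, edge set $\mathcal{E}$ and a distribution $P_V$ on $\mathcal{V}$. A subset $\mathcal{S}\subseteq\mathcal{V}$ is independent if no two of its vertices are adjacent; a map $c:\mathcal{V}\to\mathcal{C}$ into a finite set is a coloring if every $c^{-1}(i)$ is independent. The chromatic entropy is $H_\chi(G)=\inf\{H(c(V)): c\text{ a coloring of }G\}$, where $V\sim P_V$. The characteristic graph $G_{[n]}$ has vertex set $\mathcal{X}^n\times\mathcal{Z}^n$ with distribution $P^n_{X,g(Y)}$ (the law of $(X^n,(g(Y_t))_{t\le n})$), and $(x^n,z^n)$, $(x'^n,z'^n)$ are adjacent iff $z^n=z'^n$ and there is $y^n\in\mathcal{Y}^n$ with $g(y_t)=z_t$ for all $t$ such that $P_{X,Y}(x_t,y_t)P_{X,Y}(x'_t,y_t)>0$ for all $t\le n$ and $f(x_t,y_t)\ne f(x'_t,y_t)$ for some $t\le n$. *)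

theory Defs
  imports Complex_Main
begin

definition is_joint_dist :: "('x::finite \<Rightarrow> 'y::finite \<Rightarrow> real) \<Rightarrow> bool" where
  "is_joint_dist P \<longleftrightarrow> (\<forall>x y. P x y \<ge> 0) \<and> (\<Sum>x\<in>UNIV. \<Sum>y\<in>UNIV. P x y) = 1"

definition full_marginals :: "('x::finite \<Rightarrow> 'y::finite \<Rightarrow> real) \<Rightarrow> bool" where
  "full_marginals P \<longleftrightarrow> (\<forall>x. (\<Sum>y\<in>UNIV. P x y) > 0) \<and> (\<forall>y. (\<Sum>x\<in>UNIV. P x y) > 0)"

definition Pn :: "('x \<Rightarrow> 'y \<Rightarrow> real) \<Rightarrow> nat \<Rightarrow> 'x list \<Rightarrow> 'y list \<Rightarrow> real" where
  "Pn P n xs ys = (\<Prod>i<n. P (xs ! i) (ys ! i))"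

definition prefix_free :: "bool list set \<Rightarrow> bool" where
  "prefix_free S \<longleftrightarrow> (\<forall>w\<in>S. \<forall>w'\<in>S. w \<noteq> w' \<longrightarrow> \<not> (\<exists>v. w' = w @ v))"

definition zero_error_code ::
  "('x::finite \<Rightarrow> 'y::finite \<Rightarrow> real) \<Rightarrow> ('x \<Rightarrow> 'y \<Rightarrow> 'u) \<Rightarrow> ('y \<Rightarrow> 'z::finite) \<Rightarrow> nat \<Rightarrow> real
    \<Rightarrow> ('x list \<Rightarrow> 'z list \<Rightarrow> bool list) \<Rightarrow> ('y list \<Rightarrow> bool list \<Rightarrow> 'u list) \<Rightarrow> bool" where
  "zero_error_code P f g n R enc dec \<longleftrightarrow>
     prefix_free ((\<lambda>(xs, zs). enc xs zs) ` {(xs, zs). length xs = n \<and> length zs = n})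
   \<and> R = (1 / real n) * (\<Sum>xs\<in>{xs. length xs = n}. \<Sum>ys\<in>{ys. length ys = n}.
            Pn P n xs ys * real (length (enc xs (map g ys))))
   \<and> (\<forall>xs ys. length xs = n \<and> length ys = n \<and> Pn P n xs ys > 0 \<longrightarrow>
            dec ys (enc xs (map g ys)) = map2 f xs ys)"

definition achievable_rate ::
  "('x::finite \<Rightarrow> 'y::finite \<Rightarrow> real) \<Rightarrow> ('x \<Rightarrow> 'y \<Rightarrow> 'u) \<Rightarrow> ('y \<Rightarrow> 'z::finite) \<Rightarrow> real \<Rightarrow> bool" where
  "achievable_rate P f g R \<longleftrightarrow>
     (\<exists>r :: nat \<Rightarrow> real. (\<forall>n>0. \<exists>enc dec. zero_error_code P f g n (r n) enc dec)
                       \<and> r \<longlonglongrightarrow> R)"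

definition optimal_rate ::
  "('x::finite \<Rightarrow> 'y::finite \<Rightarrow> real) \<Rightarrow> ('x \<Rightarrow> 'y \<Rightarrow> 'u) \<Rightarrow> ('y \<Rightarrow> 'z::finite) \<Rightarrow> real" where
  "optimal_rate P f g = Inf {R. R \<ge> 0 \<and> achievable_rate P f g R}"

definition char_vertices :: "nat \<Rightarrow> ('x list \<times> 'z list) set" where
  "char_vertices n = {(xs, zs). length xs = n \<and> length zs = n}"

definition char_dist ::
  "('x::finite \<Rightarrow> 'y::finite \<Rightarrow> real) \<Rightarrow> ('y \<Rightarrow> 'z) \<Rightarrow> nat \<Rightarrow> 'x list \<times> 'z list \<Rightarrow> real" where
  "char_dist P g n v = (\<Sum>ys\<in>{ys. length ys = n \<and> map g ys = snd v}. Pn P n (fst v) ys)"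

definition char_adj ::
  "('x::finite \<Rightarrow> 'y::finite \<Rightarrow> real) \<Rightarrow> ('x \<Rightarrow> 'y \<Rightarrow> 'u) \<Rightarrow> ('y \<Rightarrow> 'z) \<Rightarrow> nat
    \<Rightarrow> 'x list \<times> 'z list \<Rightarrow> 'x list \<times> 'z list \<Rightarrow> bool" where
  "char_adj P f g n v v' \<longleftrightarrow>
     snd v = snd v' \<and>
     (\<exists>ys. length ys = n \<and> (\<forall>t<n. g (ys ! t) = snd v ! t) \<and>
        (\<forall>t<n. P (fst v ! t) (ys ! t) * P (fst v' ! t) (ys ! t) > 0) \<and>
        (\<exists>t<n. f (fst v ! t) (ys ! t) \<noteq> f (fst v' ! t) (ys ! t)))"

text \<open>General probabilistic graph notions: coloring and chromatic entropy (in bits).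
  Colours are taken in nat; any coloring into a finite set can be relabelled injectively into nat.\<close>
definition is_coloring :: "'v set \<Rightarrow> ('v \<Rightarrow> 'v \<Rightarrow> bool) \<Rightarrow> ('v \<Rightarrow> nat) \<Rightarrow> bool" where
  "is_coloring V E c \<longleftrightarrow> (\<forall>v\<in>V. \<forall>v'\<in>V. c v = c v' \<longrightarrow> \<not> E v v')"

definition entropy_of_map :: "'v set \<Rightarrow> ('v \<Rightarrow> real) \<Rightarrow> ('v \<Rightarrow> nat) \<Rightarrow> real" where
  "entropy_of_map V Q c =
     - (\<Sum>k\<in>c ` V. (\<Sum>v\<in>{v\<in>V. c v = k}. Q v) * log 2 (\<Sum>v\<in>{v\<in>V. c v = k}. Q v))"

definition chromatic_entropy :: "'v set \<Rightarrow> ('v \<Rightarrow> 'v \<Rightarrow> bool) \<Rightarrow> ('v \<Rightarrow> real) \<Rightarrow> real" where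
  "chromatic_entropy V E Q = Inf {entropy_of_map V Q c | c. is_coloring V E c}"

end

theory Submission
  imports Defs "HOL-Library.Countable" "HOL-Library.Nat_Bijection"
begin


abbreviation LL :: "nat \<Rightarrow> 'a list set" where "LL n \<equiv> {xs. length xs = n}"

lemma finite_LL[simp]: "finite (LL n :: 'a::finite list set)"
  using finite_lists_length_eq[of "UNIV :: 'a set" n] by simp

lemma card_LL_bool: "card (LL n :: bool list set) = 2 ^ n"
  using card_lists_length_eq[of "UNIV :: bool set" n] by simp

lemma LL_append: "LL (m + n) = (\<lambda>(a, b). a @ b) ` (LL m \<times> (LL n :: 'a list set))"
proof (intro set_eqI iffI)
  fix w :: "'a list" assume "w \<in> LL (m + n)"
  then show "w \<in> (\<lambda>(a, b). a @ b) ` (LL m \<times> LL n)"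
    by (intro image_eqI[of _ _ "(take m w, drop m w)"]) auto
qed auto

lemma inj_append_LL: "inj_on (\<lambda>(a, b). a @ b) (LL m \<times> LL n)"
  by (auto simp: inj_on_def)

lemma sum_LL_append:
  fixes h :: "'a::finite list \<Rightarrow> 'b::comm_monoid_add"
  shows "(\<Sum>w\<in>LL (m + n). h w) = (\<Sum>a\<in>LL m. \<Sum>b\<in>LL n. h (a @ b))"
proof -
  have "(\<Sum>w\<in>LL (m + n). h w) = (\<Sum>p\<in>LL m \<times> LL n. h ((\<lambda>(a, b). a @ b) p))"
    by (subst LL_append, rule sum.reindex[OF inj_append_LL, unfolded comp_def])
  also have "\<dots> = (\<Sum>a\<in>LL m. \<Sum>b\<in>LL n. h (a @ b))"
    unfolding sum.cartesian_product by (simp add: case_prod_beta)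
  finally show ?thesis .
qed

lemma Pn_Suc: "Pn P (Suc k) xs ys = Pn P k xs ys * P (xs ! k) (ys ! k)"
  by (simp add: Pn_def)

lemma Pn_append:
  assumes "length xs1 = m" "length ys1 = m"
  shows "Pn P (m + n) (xs1 @ xs2) (ys1 @ ys2) = Pn P m xs1 ys1 * Pn P n xs2 ys2"
proof (induction n)
  case 0 then show ?case using assms by (simp add: Pn_def nth_append)
next
  case (Suc n)
  have "Pn P (m + Suc n) (xs1 @ xs2) (ys1 @ ys2) = Pn P (m + n) (xs1 @ xs2) (ys1 @ ys2) * P (xs2 ! n) (ys2 ! n)"
    using assms by (simp add: Pn_Suc nth_append)
  then show ?case using Suc by (simp add: Pn_Suc)
qed

lemma Pn_one: "Pn P 1 [x] [y] = P x y"
  by (simp add: Pn_def)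

lemma LL_one: "LL 1 = (\<lambda>x. [x]) ` UNIV"
  by (auto simp: length_Suc_conv)

lemma sum_LL_one:
  fixes h :: "'a::finite list \<Rightarrow> 'b::comm_monoid_add"
  shows "(\<Sum>w\<in>LL 1. h w) = (\<Sum>x\<in>UNIV. h [x])"
  by (subst LL_one, subst sum.reindex) (auto simp: inj_on_def)

lemma sum_Pn_total:
  fixes P :: "'x::finite \<Rightarrow> 'y::finite \<Rightarrow> real"
  assumes "is_joint_dist P"
  shows "(\<Sum>xs\<in>LL n. \<Sum>ys\<in>LL n. Pn P n xs ys) = 1"
proof (induction n)
  case 0 then show ?case by (simp add: Pn_def)
next
  case (Suc n)
  have "(\<Sum>xs\<in>LL (n+1). \<Sum>ys\<in>LL (n+1). Pn P (n+1) xs ys)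
      = (\<Sum>a\<in>LL n. \<Sum>b\<in>LL 1. \<Sum>c\<in>LL n. \<Sum>d\<in>LL 1. Pn P (n+1) (a @ b) (c @ d))"
    by (simp only: sum_LL_append)
  also have "\<dots> = (\<Sum>a\<in>LL n. \<Sum>b\<in>LL 1. \<Sum>c\<in>LL n. \<Sum>d\<in>LL 1. Pn P n a c * Pn P 1 b d)"
    by (intro sum.cong refl) (auto simp: Pn_append[where n=1, simplified])
  also have "\<dots> = (\<Sum>a\<in>LL n. \<Sum>c\<in>LL n. Pn P n a c * (\<Sum>b\<in>LL 1. \<Sum>d\<in>LL 1. Pn P 1 b d))"
    by (intro sum.cong refl, subst sum.swap) (simp add: sum_distrib_left)
  also have "\<dots> = (\<Sum>a\<in>LL n. \<Sum>c\<in>LL n. Pn P n a c) * (\<Sum>b\<in>LL 1. \<Sum>d\<in>LL 1. Pn P 1 b d)"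
    by (simp add: sum_distrib_right)
  also have "(\<Sum>b\<in>LL 1. \<Sum>d\<in>LL 1. Pn P 1 b d) = 1"
    using assms unfolding sum_LL_one Pn_one is_joint_dist_def by simp
  finally show ?case using Suc by simp
qed

lemma Pn_nonneg: "is_joint_dist P \<Longrightarrow> Pn P n xs ys \<ge> 0"
  by (simp add: Pn_def is_joint_dist_def prod_nonneg)

lemma Pn_pos_iff:
  assumes "is_joint_dist P"
  shows "Pn P n xs ys > 0 \<longleftrightarrow> (\<forall>t<n. P (xs ! t) (ys ! t) > 0)"
proof
  assume "Pn P n xs ys > 0"
  then have "\<forall>t<n. P (xs ! t) (ys ! t) \<noteq> 0"
    unfolding Pn_def by (metis (no_types, lifting) prod_zero finite_lessThan lessThan_iff less_irrefl)
  then show "\<forall>t<n. P (xs ! t) (ys ! t) > 0" using assms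
    by (auto simp: is_joint_dist_def less_le)
qed (unfold Pn_def, intro prod_pos, auto)



lemma char_vertices_eq: "char_vertices n = LL n \<times> LL n"
  by (auto simp: char_vertices_def)

lemma finite_char_vertices[simp]: "finite (char_vertices n :: ('x::finite list \<times> 'z::finite list) set)"
  by (simp add: char_vertices_eq)

lemma regroup:
  fixes P :: "'x::finite \<Rightarrow> 'y::finite \<Rightarrow> real" and g :: "'y \<Rightarrow> 'z::finite"
  shows "(\<Sum>xs\<in>LL n. \<Sum>ys\<in>LL n. Pn P n xs ys * h xs (map g ys))
       = (\<Sum>v\<in>char_vertices n. char_dist P g n v * h (fst v) (snd v))"
proof -
  have "(\<Sum>v\<in>char_vertices n. char_dist P g n v * h (fst v) (snd v))
      = (\<Sum>xs\<in>LL n. \<Sum>zs\<in>LL n. char_dist P g n (xs, zs) * h xs zs)"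
    unfolding char_vertices_eq sum.cartesian_product by (simp add: case_prod_beta)
  also have "\<dots> = (\<Sum>xs\<in>LL n. \<Sum>zs\<in>LL n. \<Sum>ys\<in>{ys \<in> LL n. map g ys = zs}. Pn P n xs ys * h xs (map g ys))"
    unfolding char_dist_def by (intro sum.cong refl) (auto simp: sum_distrib_right)
  also have "\<dots> = (\<Sum>xs\<in>LL n. \<Sum>ys\<in>LL n. Pn P n xs ys * h xs (map g ys))"
    by (intro sum.cong refl sum.group) auto
  finally show ?thesis by simp
qed

lemma char_dist_total:
  fixes P :: "'x::finite \<Rightarrow> 'y::finite \<Rightarrow> real" and g :: "'y \<Rightarrow> 'z::finite"
  assumes "is_joint_dist P"
  shows "(\<Sum>v\<in>char_vertices n. char_dist P g n v) = 1"
  using regroup[of P n "\<lambda>_ _. 1" g] sum_Pn_total[OF assms, of n] by simp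

lemma char_dist_nonneg: "is_joint_dist P \<Longrightarrow> char_dist P g n v \<ge> 0"
  unfolding char_dist_def by (intro sum_nonneg Pn_nonneg)

lemma char_dist_append:
  fixes P :: "'x::finite \<Rightarrow> 'y::finite \<Rightarrow> real" and g :: "'y \<Rightarrow> 'z::finite"
  assumes "length xs1 = m" "length zs1 = m" "length zs2 = n"
  shows "char_dist P g (m + n) (xs1 @ xs2, zs1 @ zs2) = char_dist P g m (xs1, zs1) * char_dist P g n (xs2, zs2)"
proof -
  have "char_dist P g (m + n) (xs1 @ xs2, zs1 @ zs2)
      = (\<Sum>ys\<in>LL (m + n). if map g ys = zs1 @ zs2 then Pn P (m + n) (xs1 @ xs2) ys else 0)"
    unfolding char_dist_def by (simp add: sum.inter_filter[symmetric] conj_commute)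
  also have "\<dots> = (\<Sum>a\<in>LL m. \<Sum>b\<in>LL n. (if map g a = zs1 then Pn P m xs1 a else 0) * (if map g b = zs2 then Pn P n xs2 b else 0))"
    unfolding sum_LL_append using assms by (intro sum.cong refl) (auto simp: Pn_append)
  also have "\<dots> = (\<Sum>a\<in>LL m. if map g a = zs1 then Pn P m xs1 a else 0) * (\<Sum>b\<in>LL n. if map g b = zs2 then Pn P n xs2 b else 0)"
    by (simp add: sum_product)
  also have "\<dots> = char_dist P g m (xs1, zs1) * char_dist P g n (xs2, zs2)"
    unfolding char_dist_def by (simp add: sum.inter_filter[symmetric] conj_commute)
  finally show ?thesis .
qed



definition mass :: "'v set \<Rightarrow> ('v \<Rightarrow> real) \<Rightarrow> ('v \<Rightarrow> nat) \<Rightarrow> nat \<Rightarrow> real" where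
  "mass V Q c k = (\<Sum>v\<in>{v\<in>V. c v = k}. Q v)"

lemma entropy_mass: "entropy_of_map V Q c = - (\<Sum>k\<in>c ` V. mass V Q c k * log 2 (mass V Q c k))"
  by (simp add: entropy_of_map_def mass_def)

lemma sum_by_class:
  assumes "finite V"
  shows "(\<Sum>v\<in>V. Q v * F (c v)) = (\<Sum>k\<in>c ` V. mass V Q c k * F k)"
proof -
  have "(\<Sum>v\<in>V. Q v * F (c v)) = (\<Sum>k\<in>c ` V. \<Sum>v\<in>{v\<in>V. c v = k}. Q v * F (c v))"
    by (rule sum.image_gen[OF assms])
  also have "\<dots> = (\<Sum>k\<in>c ` V. mass V Q c k * F k)"
    unfolding mass_def by (intro sum.cong refl) (auto simp: sum_distrib_right)
  finally show ?thesis .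
qed

lemma sum_mass:
  assumes "finite V"
  shows "(\<Sum>k\<in>c ` V. mass V Q c k) = (\<Sum>v\<in>V. Q v)"
  using sum_by_class[OF assms, where Q=Q and F="\<lambda>_. 1" and c=c] by simp

lemma mass_nonneg: "(\<And>v. v \<in> V \<Longrightarrow> Q v \<ge> 0) \<Longrightarrow> mass V Q c k \<ge> 0"
  unfolding mass_def by (rule sum_nonneg) auto

lemma mass_le:
  assumes "finite V" "\<And>v. v \<in> V \<Longrightarrow> Q v \<ge> 0"
  shows "mass V Q c k \<le> (\<Sum>v\<in>V. Q v)"
  unfolding mass_def by (rule sum_mono2) (use assms in auto)

lemma entropy_nonneg:
  assumes "finite V" "\<And>v. v \<in> V \<Longrightarrow> Q v \<ge> 0" "(\<Sum>v\<in>V. Q v) = 1"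
  shows "entropy_of_map V Q c \<ge> 0"
proof -
  have "mass V Q c k * log 2 (mass V Q c k) \<le> 0" for k
  proof -
    have "0 \<le> mass V Q c k" "mass V Q c k \<le> 1"
      using mass_nonneg[of V Q c k] mass_le[where V=V and Q=Q and c=c and k=k, OF assms(1,2)] assms(2,3) by auto
    then show ?thesis
      by (cases "mass V Q c k = 0") (auto intro!: mult_nonneg_nonpos)
  qed
  then show ?thesis unfolding entropy_mass by (simp add: sum_nonpos)
qed

lemma gibbs_term:
  fixes m :: real and l :: nat
  assumes "m \<ge> 0"
  shows "- (m * log 2 m) \<le> m * l + ((1/2) ^ l - m) / ln 2"
proof (cases "m = 0")
  case True then show ?thesis by simp
next
  case False
  then have mpos: "m > 0" using assms by simp
  have "ln ((1/2) ^ l / m) \<le> (1/2) ^ l / m - 1"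
    by (rule ln_le_minus_one) (simp add: mpos)
  moreover have "ln ((1/2) ^ l / m) = - (l * ln 2) - ln m"
  proof -
    have "ln ((1/2::real) ^ l / m) = ln ((1/2) ^ l) - ln m" using mpos by (simp add: ln_div)
    also have "ln ((1/2::real) ^ l) = l * ln (1/2)" by (simp add: ln_realpow)
    also have "ln (1/2::real) = - ln 2" by (simp add: ln_div)
    finally show ?thesis by simp
  qed
  ultimately have "- (l * ln 2) - ln m \<le> (1/2) ^ l / m - 1" by simp
  then have "m * (- (l * ln 2) - ln m) \<le> m * ((1/2) ^ l / m - 1)"
    using mpos by (intro mult_left_mono) auto
  then have "- (m * ln m) \<le> m * l * ln 2 + ((1/2) ^ l - m)"
    using mpos by (simp add: algebra_simps)
  then have "- (m * ln m) / ln 2 \<le> (m * l * ln 2 + ((1/2) ^ l - m)) / ln 2"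
    by (intro divide_right_mono) auto
  then show ?thesis
    by (simp add: log_def add_divide_distrib)
qed

lemma gibbs:
  assumes "finite V" "\<And>v. v \<in> V \<Longrightarrow> Q v \<ge> 0" "(\<Sum>v\<in>V. Q v) = 1"
    and kraft: "(\<Sum>k\<in>c ` V. (1/2::real) ^ len k) \<le> 1"
  shows "entropy_of_map V Q c \<le> (\<Sum>v\<in>V. Q v * real (len (c v)))"
proof -
  let ?m = "mass V Q c"
  have "entropy_of_map V Q c = (\<Sum>k\<in>c ` V. - (?m k * log 2 (?m k)))"
    by (simp add: entropy_mass sum_negf)
  also have "\<dots> \<le> (\<Sum>k\<in>c ` V. ?m k * len k + ((1/2) ^ len k - ?m k) / ln 2)"
    by (intro sum_mono gibbs_term mass_nonneg assms(2)) auto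
  also have "\<dots> = (\<Sum>k\<in>c ` V. ?m k * len k) + ((\<Sum>k\<in>c ` V. (1/2) ^ len k) - (\<Sum>k\<in>c ` V. ?m k)) / ln 2"
    by (simp add: sum.distrib sum_divide_distrib[symmetric] sum_subtractf)
  also have "\<dots> \<le> (\<Sum>k\<in>c ` V. ?m k * len k)"
    using kraft sum_mass[OF assms(1), where c=c and Q=Q] assms(3) by (simp add: divide_nonpos_pos)
  also have "\<dots> = (\<Sum>v\<in>V. Q v * real (len (c v)))"
    by (rule sum_by_class[OF assms(1), symmetric])
  finally show ?thesis .
qed



lemma shannon_term:
  fixes m :: real
  assumes "0 < m" "m \<le> 1"
  shows "(1/2::real) ^ (nat \<lceil>- log 2 m\<rceil>) \<le> m" "real (nat \<lceil>- log 2 m\<rceil>) \<le> - log 2 m + 1"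
proof -
  let ?y = "- log 2 m"
  have y0: "?y \<ge> 0" using assms by simp
  then have c0: "\<lceil>?y\<rceil> \<ge> 0" by simp
  then have eq: "real (nat \<lceil>?y\<rceil>) = of_int \<lceil>?y\<rceil>" by simp
  have "(1/2::real) ^ (nat \<lceil>?y\<rceil>) = 2 powr (- real (nat \<lceil>?y\<rceil>))"
    by (simp add: powr_minus powr_realpow power_one_over inverse_eq_divide)
  also have "\<dots> \<le> 2 powr (- ?y)"
  proof (rule powr_mono)
    show "- real (nat \<lceil>?y\<rceil>) \<le> - ?y" using eq le_of_int_ceiling[of ?y] by linarith
  qed simp
  also have "\<dots> = m" using assms by simp
  finally show "(1/2::real) ^ (nat \<lceil>?y\<rceil>) \<le> m" .
  show "real (nat \<lceil>?y\<rceil>) \<le> ?y + 1" using eq of_int_ceiling_le_add_one[of ?y] by simp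
qed

lemma shannon_code_lengths:
  assumes fin: "finite V" and nn: "\<And>v. v \<in> V \<Longrightarrow> Q v \<ge> 0" and tot: "(\<Sum>v\<in>V. Q v) = 1"
  shows "\<exists>len. (\<Sum>k\<in>c ` V. (1/2::real) ^ len k) \<le> 1
           \<and> (\<Sum>v\<in>V. Q v * real (len (c v))) \<le> entropy_of_map V Q c + 2"
proof -
  let ?m = "mass V Q c"
  let ?N = "card (c ` V)"
  define len where "len k = (if ?m k > 0 then nat \<lceil>- log 2 (?m k)\<rceil> + 1 else ?N + 1)" for k
  have m01: "0 \<le> ?m k" "?m k \<le> 1" for k
    using mass_nonneg[of V Q c k] mass_le[where V=V and Q=Q and c=c and k=k, OF fin nn] nn tot by auto
  have t1: "(1/2::real) ^ len k \<le> ?m k / 2 + (1/2) ^ (?N + 1)" for k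
  proof (cases "?m k > 0")
    case True
    then have "(1/2::real) ^ len k = (1/2) * (1/2) ^ (nat \<lceil>- log 2 (?m k)\<rceil>)"
      by (simp add: len_def)
    also have "\<dots> \<le> (1/2) * ?m k" using shannon_term(1)[OF True m01(2)] by simp
    finally have "(1/2::real) ^ len k \<le> ?m k / 2" by simp
    moreover have "(0::real) \<le> (1/2) ^ (?N + 1)" by simp
    ultimately show ?thesis by linarith
  next
    case False
    have "0 \<le> ?m k" by (rule m01(1))
    with False have "?m k = 0" by linarith
    then show ?thesis by (simp add: len_def)
  qed
  have "(\<Sum>k\<in>c ` V. (1/2::real) ^ len k) \<le> (\<Sum>k\<in>c ` V. ?m k / 2 + (1/2) ^ (?N + 1))"
    by (intro sum_mono t1)
  also have "\<dots> = (\<Sum>k\<in>c ` V. ?m k) / 2 + ?N * (1/2) ^ (?N + 1)"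
    by (simp add: sum.distrib sum_divide_distrib)
  also have "\<dots> = 1/2 + ?N / 2 ^ (?N + 1)"
    using sum_mass[OF fin, where c=c and Q=Q] tot by (simp add: power_one_over)
  also have "\<dots> \<le> 1"
  proof -
    have "real ?N \<le> 2 ^ ?N" using less_exp[of ?N] by (simp add: of_nat_less_two_power less_imp_le)
    then have "real ?N / 2 ^ (?N + 1) \<le> 1/2" by (simp add: divide_simps)
    then show ?thesis by linarith
  qed
  finally have K: "(\<Sum>k\<in>c ` V. (1/2::real) ^ len k) \<le> 1" .
  have t2: "?m k * real (len k) \<le> - (?m k * log 2 (?m k)) + 2 * ?m k" for k
  proof (cases "?m k > 0")
    case True
    have "real (len k) \<le> - log 2 (?m k) + 2"
      using shannon_term(2)[OF True m01(2)] True by (simp add: len_def)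
    then have "?m k * real (len k) \<le> ?m k * (- log 2 (?m k) + 2)"
      using True by (intro mult_left_mono) auto
    then show ?thesis by (simp add: algebra_simps)
  next
    case False
    have "0 \<le> ?m k" by (rule m01(1))
    with False have "?m k = 0" by linarith
    then show ?thesis by simp
  qed
  have "(\<Sum>v\<in>V. Q v * real (len (c v))) = (\<Sum>k\<in>c ` V. ?m k * real (len k))"
    by (rule sum_by_class[OF fin])
  also have "\<dots> \<le> (\<Sum>k\<in>c ` V. - (?m k * log 2 (?m k)) + 2 * ?m k)"
    by (intro sum_mono t2)
  also have "\<dots> = entropy_of_map V Q c + 2"
    using sum_mass[OF fin, where c=c and Q=Q] tot
    by (simp add: sum.distrib entropy_mass sum_negf sum_subtractf sum_distrib_left[symmetric])
  finally show ?thesis using K by blast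
qed

lemma mass_reindex:
  assumes "inj_on h W"
  shows "mass (h ` W) Q c k = mass W (Q \<circ> h) (c \<circ> h) k"
proof -
  have "{v \<in> h ` W. c v = k} = h ` {w \<in> W. c (h w) = k}" by auto
  moreover have "inj_on h {w \<in> W. c (h w) = k}" using assms by (rule inj_on_subset) auto
  ultimately show ?thesis unfolding mass_def by (simp add: sum.reindex)
qed

lemma entropy_reindex:
  assumes "inj_on h W"
  shows "entropy_of_map (h ` W) Q c = entropy_of_map W (Q \<circ> h) (c \<circ> h)"
  unfolding entropy_mass mass_reindex[OF assms] by (simp add: image_comp)

lemma sum_prod_sep:
  "(\<Sum>p\<in>A \<times> B. (F (fst p) :: real) * G (snd p)) = (\<Sum>a\<in>A. F a) * (\<Sum>b\<in>B. G b)"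
  unfolding sum_product sum.cartesian_product by (simp add: case_prod_beta)

lemma plogp_mult:
  fixes a b :: real
  assumes "a \<ge> 0" "b \<ge> 0"
  shows "(a * b) * log 2 (a * b) = (a * log 2 a) * b + (b * log 2 b) * a"
proof (cases "a = 0 \<or> b = 0")
  case True then show ?thesis by auto
next
  case False
  then have "a > 0" "b > 0" using assms by auto
  then show ?thesis by (simp add: log_mult algebra_simps)
qed

lemma entropy_product:
  assumes fin1: "finite V1" and nn1: "\<And>v. v \<in> V1 \<Longrightarrow> Q1 v \<ge> 0" and tot1: "(\<Sum>v\<in>V1. Q1 v) = 1"
    and fin2: "finite V2" and nn2: "\<And>v. v \<in> V2 \<Longrightarrow> Q2 v \<ge> 0" and tot2: "(\<Sum>v\<in>V2. Q2 v) = 1"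
  shows "entropy_of_map (V1 \<times> V2) (\<lambda>p. Q1 (fst p) * Q2 (snd p)) (\<lambda>p. prod_encode (c1 (fst p), c2 (snd p)))
       = entropy_of_map V1 Q1 c1 + entropy_of_map V2 Q2 c2"
proof -
  let ?Q = "\<lambda>p. Q1 (fst p) * Q2 (snd p)" and ?c = "\<lambda>p. prod_encode (c1 (fst p), c2 (snd p))"
  let ?m1 = "mass V1 Q1 c1" and ?m2 = "mass V2 Q2 c2" and ?m = "mass (V1 \<times> V2) ?Q ?c"
  have mm: "?m (prod_encode (k1, k2)) = ?m1 k1 * ?m2 k2" for k1 k2
  proof -
    have se: "{p \<in> V1 \<times> V2. ?c p = prod_encode (k1, k2)} = {a \<in> V1. c1 a = k1} \<times> {b \<in> V2. c2 b = k2}"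
      by auto
    have "?m (prod_encode (k1, k2)) = (\<Sum>p\<in>{a \<in> V1. c1 a = k1} \<times> {b \<in> V2. c2 b = k2}. Q1 (fst p) * Q2 (snd p))"
      unfolding mass_def se by simp
    also have "\<dots> = (\<Sum>a\<in>{a \<in> V1. c1 a = k1}. \<Sum>b\<in>{b \<in> V2. c2 b = k2}. Q1 a * Q2 b)"
      unfolding sum.cartesian_product by (simp add: case_prod_beta)
    also have "\<dots> = ?m1 k1 * ?m2 k2" unfolding mass_def by (simp add: sum_product)
    finally show ?thesis .
  qed
  have img: "?c ` (V1 \<times> V2) = prod_encode ` (c1 ` V1 \<times> c2 ` V2)" by force
  have inj: "inj_on prod_encode (c1 ` V1 \<times> c2 ` V2)" by (auto simp: inj_on_def)
  have s1: "(\<Sum>k\<in>c1 ` V1. ?m1 k) = 1" using sum_mass[OF fin1, where c=c1 and Q=Q1] tot1 by simp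
  have s2: "(\<Sum>k\<in>c2 ` V2. ?m2 k) = 1" using sum_mass[OF fin2, where c=c2 and Q=Q2] tot2 by simp
  have "(\<Sum>k\<in>?c ` (V1 \<times> V2). ?m k * log 2 (?m k))
      = (\<Sum>p\<in>c1 ` V1 \<times> c2 ` V2. ?m (prod_encode p) * log 2 (?m (prod_encode p)))"
    unfolding img by (simp add: sum.reindex[OF inj])
  also have "\<dots> = (\<Sum>p\<in>c1 ` V1 \<times> c2 ` V2. (?m1 (fst p) * log 2 (?m1 (fst p))) * ?m2 (snd p))
                 + (\<Sum>p\<in>c1 ` V1 \<times> c2 ` V2. ?m1 (fst p) * (?m2 (snd p) * log 2 (?m2 (snd p))))"
    by (intro sum.cong refl trans[OF _ sum.distrib]) (auto simp: mm plogp_mult mass_nonneg nn1 nn2)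
  also have "\<dots> = (\<Sum>k\<in>c1 ` V1. ?m1 k * log 2 (?m1 k)) * (\<Sum>k\<in>c2 ` V2. ?m2 k)
                 + (\<Sum>k\<in>c1 ` V1. ?m1 k) * (\<Sum>k\<in>c2 ` V2. ?m2 k * log 2 (?m2 k))"
    using sum_prod_sep[where A="c1 ` V1" and B="c2 ` V2" and F="\<lambda>a. ?m1 a * log 2 (?m1 a)" and G="?m2"]
      sum_prod_sep[where A="c1 ` V1" and B="c2 ` V2" and F="?m1" and G="\<lambda>a. ?m2 a * log 2 (?m2 a)"]
    by simp
  finally show ?thesis unfolding entropy_mass using s1 s2 by simp
qed



lemma prefix_free_vimage: "prefix_free S \<Longrightarrow> prefix_free (Cons b -` S)"
  unfolding prefix_free_def
proof (intro ballI impI notI)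
  fix w w' assume A: "\<forall>w\<in>S. \<forall>w'\<in>S. w \<noteq> w' \<longrightarrow> \<not> (\<exists>v. w' = w @ v)"
    and w: "w \<in> Cons b -` S" "w' \<in> Cons b -` S" "w \<noteq> w'" and "\<exists>v. w' = w @ v"
  then obtain v where "w' = w @ v" by blast
  then have "b # w' = (b # w) @ v" by simp
  moreover have "b # w \<in> S" "b # w' \<in> S" "b # w \<noteq> b # w'" using w by auto
  moreover have "b # w \<noteq> b # w' \<longrightarrow> \<not> (\<exists>v. b # w' = (b # w) @ v)"
    using bspec[OF bspec[OF A \<open>b # w \<in> S\<close>] \<open>b # w' \<in> S\<close>] .
  ultimately show False by auto
qed

lemma prefix_free_Nil: "prefix_free S \<Longrightarrow> [] \<in> S \<Longrightarrow> S = {[]}"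
proof (intro set_eqI iffI)
  fix w assume A: "prefix_free S" "[] \<in> S" "w \<in> S"
  show "w \<in> {[]}"
  proof (rule ccontr)
    assume "w \<notin> {[]}"
    then have "w \<noteq> []" by simp
    moreover have "w = [] @ w" by simp
    moreover have "[] \<noteq> w \<longrightarrow> \<not> (\<exists>v. w = [] @ v)"
      using bspec[OF bspec[OF A(1)[unfolded prefix_free_def] A(2)] A(3)] .
    ultimately show False by auto
  qed
qed auto

lemma kraft_aux:
  "\<forall>S. finite S \<and> prefix_free S \<and> (\<forall>w\<in>S. length w \<le> N) \<longrightarrow> (\<Sum>w\<in>S. (1/2::real) ^ length w) \<le> 1"
proof (induction N)
  case 0
  show ?case
  proof (intro allI impI)
    fix S :: "bool list set" assume "finite S \<and> prefix_free S \<and> (\<forall>w\<in>S. length w \<le> 0)"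
    then have "S \<subseteq> {[]}" by auto
    then have "S = {} \<or> S = {[]}" by blast
    then show "(\<Sum>w\<in>S. (1/2::real) ^ length w) \<le> 1" by auto
  qed
next
  case (Suc N)
  show ?case
  proof (intro allI impI)
    fix S :: "bool list set" assume A: "finite S \<and> prefix_free S \<and> (\<forall>w\<in>S. length w \<le> Suc N)"
    show "(\<Sum>w\<in>S. (1/2::real) ^ length w) \<le> 1"
    proof (cases "[] \<in> S")
      case True
      then have "S = {[]}" using A prefix_free_Nil by blast
      then show ?thesis by simp
    next
      case False
      define S1 where "S1 = Cons True -` S"
      define S0 where "S0 = Cons False -` S"
      have Seq: "S = Cons True ` S1 \<union> Cons False ` S0"
      proof (intro set_eqI iffI)
        fix w assume "w \<in> S"
        with False obtain b u where "w = b # u" by (cases w) auto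
        then show "w \<in> Cons True ` S1 \<union> Cons False ` S0"
          using \<open>w \<in> S\<close> unfolding S1_def S0_def by (cases b) auto
      qed (auto simp: S1_def S0_def)
      have injC: "inj (Cons b)" for b :: bool by (simp add: inj_def)
      have fin: "finite S1" "finite S0" unfolding S1_def S0_def
        using A injC by (blast intro: finite_vimageI)+
      have pf: "prefix_free S1" "prefix_free S0"
        using A unfolding S1_def S0_def by (auto intro: prefix_free_vimage)
      have len: "\<forall>w\<in>S1. length w \<le> N" "\<forall>w\<in>S0. length w \<le> N"
        using A unfolding S1_def S0_def by auto
      have s1: "(\<Sum>w\<in>S1. (1/2::real) ^ length w) \<le> 1" using Suc.IH fin pf len by blast
      have s0: "(\<Sum>w\<in>S0. (1/2::real) ^ length w) \<le> 1" using Suc.IH fin pf len by blast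
      have "(\<Sum>w\<in>S. (1/2::real) ^ length w)
          = (\<Sum>w\<in>Cons True ` S1. (1/2::real) ^ length w) + (\<Sum>w\<in>Cons False ` S0. (1/2::real) ^ length w)"
        unfolding Seq by (rule sum.union_disjoint) (use fin in auto)
      also have "\<dots> = (1/2) * (\<Sum>w\<in>S1. (1/2::real) ^ length w) + (1/2) * (\<Sum>w\<in>S0. (1/2::real) ^ length w)"
        by (simp add: sum.reindex[OF inj_on_subset[OF injC subset_UNIV]] sum_distrib_left)
      also have "\<dots> \<le> 1" using s1 s0 by simp
      finally show ?thesis .
    qed
  qed
qed

lemma kraft:
  assumes "finite S" "prefix_free S"
  shows "(\<Sum>w\<in>S. (1/2::real) ^ length w) \<le> 1"
proof -
  have "\<forall>w\<in>S. length w \<le> Max (length ` S)" using assms(1) by auto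
  then show ?thesis using kraft_aux assms by blast
qed

definition pf_on :: "'k set \<Rightarrow> ('k \<Rightarrow> bool list) \<Rightarrow> bool" where
  "pf_on K cw \<longleftrightarrow> (\<forall>k\<in>K. \<forall>k'\<in>K. k \<noteq> k' \<longrightarrow> \<not> (\<exists>v. cw k' = cw k @ v))"

lemma pf_on_inj: "pf_on K cw \<Longrightarrow> inj_on cw K"
  unfolding pf_on_def inj_on_def by (metis append_Nil2)

lemma pf_on_prefix_free: "pf_on K cw \<Longrightarrow> prefix_free (cw ` K)"
  unfolding pf_on_def prefix_free_def
proof (intro ballI impI)
  fix w w' assume A: "\<forall>k\<in>K. \<forall>k'\<in>K. k \<noteq> k' \<longrightarrow> \<not> (\<exists>v. cw k' = cw k @ v)"
    and "w \<in> cw ` K" "w' \<in> cw ` K" "w \<noteq> w'"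
  then obtain k k' where "k \<in> K" "k' \<in> K" "w = cw k" "w' = cw k'" by blast
  moreover have "k \<noteq> k'" using \<open>w \<noteq> w'\<close> calculation by auto
  ultimately show "\<not> (\<exists>v. w' = w @ v)" using A by auto
qed

lemma card_ext:
  fixes u :: "bool list"
  assumes "length u \<le> L"
  shows "card {w. length w = L \<and> (\<exists>v. w = u @ v)} = 2 ^ (L - length u)"
proof -
  have "{w. length w = L \<and> (\<exists>v. w = u @ v)} = (\<lambda>v. u @ v) ` LL (L - length u)"
    using assms by auto
  moreover have "inj_on (\<lambda>v. u @ v) (LL (L - length u))" by (auto simp: inj_on_def)
  ultimately show ?thesis by (simp add: card_image card_LL_bool)
qed

lemma kraft_converse:
  fixes l :: "'k \<Rightarrow> nat"
  assumes "finite K"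
  shows "(\<Sum>k\<in>K. (1/2::real) ^ l k) \<le> 1 \<Longrightarrow> \<exists>cw. pf_on K cw \<and> (\<forall>k\<in>K. length (cw k) = l k)"
  using assms
proof (induction K rule: finite_ranking_induct[where f = l])
  case empty then show ?case by (auto simp: pf_on_def)
next
  case (insert x S)
  show ?case
  proof (cases "x \<in> S")
    case True then show ?thesis using insert by (simp add: insert_absorb)
  next
    case False
    let ?L = "l x"
    have sumS: "(\<Sum>k\<in>S. (1/2::real) ^ l k) + (1/2) ^ ?L \<le> 1"
      using insert.prems False insert.hyps(1) by simp
    moreover have "(0::real) \<le> (1/2) ^ ?L" by simp
    ultimately have "(\<Sum>k\<in>S. (1/2::real) ^ l k) \<le> 1" by linarith
    then obtain cw where cw: "pf_on S cw" "\<forall>k\<in>S. length (cw k) = l k"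
      using insert.IH insert.hyps(1) by blast
    define ext where "ext y = {w. length w = ?L \<and> (\<exists>v. w = cw y @ v)}" for y
    have cext: "card (ext y) = 2 ^ (?L - l y)" if "y \<in> S" for y
      unfolding ext_def using card_ext[of "cw y" ?L] cw(2) that insert.hyps(2)[OF that] by simp
    have "real (card (\<Union>y\<in>S. ext y)) \<le> real (\<Sum>y\<in>S. card (ext y))"
      using card_UN_le[OF insert.hyps(1), of ext] by linarith
    also have "\<dots> = (\<Sum>y\<in>S. 2 ^ ?L * (1/2::real) ^ l y)"
    proof -
      have "real (card (ext y)) = 2 ^ ?L * (1/2::real) ^ l y" if "y \<in> S" for y
      proof -
        have "(2::real) ^ ?L = 2 ^ (?L - l y) * 2 ^ l y"
          using insert.hyps(2)[OF that] by (simp add: power_add[symmetric])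
        then show ?thesis using cext[OF that] by (simp add: power_one_over)
      qed
      then show ?thesis by (simp add: of_nat_sum)
    qed
    also have "\<dots> = 2 ^ ?L * (\<Sum>y\<in>S. (1/2::real) ^ l y)" by (simp add: sum_distrib_left)
    also have "\<dots> \<le> 2 ^ ?L * (1 - (1/2) ^ ?L)" using sumS by (intro mult_left_mono) auto
    also have "\<dots> = 2 ^ ?L - 1" by (simp add: algebra_simps power_one_over)
    finally have "real (card (\<Union>y\<in>S. ext y)) \<le> 2 ^ ?L - 1" .
    moreover have "real ((2::nat) ^ ?L) = 2 ^ ?L" by simp
    ultimately have "real (card (\<Union>y\<in>S. ext y)) < real ((2::nat) ^ ?L)" by linarith
    then have lt: "card (\<Union>y\<in>S. ext y) < card (LL ?L :: bool list set)"
      unfolding card_LL_bool by (rule of_nat_less_imp_less)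
    have "\<not> LL ?L \<subseteq> (\<Union>y\<in>S. ext y)"
    proof
      assume sub: "LL ?L \<subseteq> (\<Union>y\<in>S. ext y)"
      have "finite (\<Union>y\<in>S. ext y)"
        using insert.hyps(1) by (intro finite_UN_I) (auto simp: ext_def intro: finite_subset[OF _ finite_LL])
      then have "card (LL ?L :: bool list set) \<le> card (\<Union>y\<in>S. ext y)" using sub by (rule card_mono)
      then show False using lt by simp
    qed
    then obtain w where "w \<in> LL ?L" "w \<notin> (\<Union>y\<in>S. ext y)" by blast
    then have w: "length w = ?L" "\<forall>y\<in>S. \<not> (\<exists>v. w = cw y @ v)"
      unfolding ext_def by auto
    define cw' where "cw' = cw(x := w)"
    have "pf_on (insert x S) cw'"
      unfolding pf_on_def
    proof (intro ballI impI)
      fix k k' assume k: "k \<in> insert x S" "k' \<in> insert x S" "k \<noteq> k'"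
      show "\<not> (\<exists>v. cw' k' = cw' k @ v)"
      proof (cases "k = x")
        case True
        then have "k' \<in> S" "k' \<noteq> x" using k by auto
        show ?thesis
        proof
          assume "\<exists>v. cw' k' = cw' k @ v"
          then obtain v where "cw k' = w @ v" using True \<open>k' \<noteq> x\<close> by (auto simp: cw'_def)
          moreover have "length (cw k') \<le> length w"
            using cw(2) \<open>k' \<in> S\<close> insert.hyps(2)[OF \<open>k' \<in> S\<close>] w(1) by simp
          ultimately have "w = cw k' @ []" by simp
          then show False using w(2) \<open>k' \<in> S\<close> by blast
        qed
      next
        case False
        then have "k \<in> S" using k by auto
        show ?thesis
        proof (cases "k' = x")
          case True then show ?thesis using w(2) \<open>k \<in> S\<close> False by (auto simp: cw'_def)
        next
          case False
          then have "k' \<in> S" using k by auto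
          then show ?thesis using cw(1) \<open>k \<in> S\<close> k(3) \<open>k \<noteq> x\<close> False
            unfolding pf_on_def cw'_def by auto
        qed
      qed
    qed
    moreover have "\<forall>k\<in>insert x S. length (cw' k) = l k"
      using cw(2) w(1) False by (auto simp: cw'_def)
    ultimately show ?thesis by blast
  qed
qed



abbreviation HC where
  "HC P f g n \<equiv> chromatic_entropy (char_vertices n) (char_adj P f g n) (char_dist P g n)"

lemma entropy_cong:
  assumes "\<And>v. v \<in> V \<Longrightarrow> Q v = Q' v" "\<And>v. v \<in> V \<Longrightarrow> c v = c' v"
  shows "entropy_of_map V Q c = entropy_of_map V Q' c'"
proof -
  have m: "mass V Q c k = mass V Q' c' k" for k
    unfolding mass_def using assms by (intro sum.cong) auto
  have "c ` V = c' ` V" using assms(2) by (rule image_cong[OF refl])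
  then show ?thesis unfolding entropy_mass m by simp
qed

lemma char_adj_irrefl: "\<not> char_adj P f g n v v"
  by (auto simp: char_adj_def)

lemma coloring_to_nat:
  fixes V :: "('x::finite list \<times> 'z::finite list) set"
  shows "is_coloring V (char_adj P f g n) to_nat"
  by (auto simp: is_coloring_def char_adj_irrefl)

lemma ent_set_facts:
  fixes P :: "'x::finite \<Rightarrow> 'y::finite \<Rightarrow> real" and f :: "'x \<Rightarrow> 'y \<Rightarrow> 'u" and g :: "'y \<Rightarrow> 'z::finite"
    and n :: nat
  assumes jd: "is_joint_dist P"
  defines "S \<equiv> {entropy_of_map (char_vertices n) (char_dist P g n) c | c. is_coloring (char_vertices n) (char_adj P f g n) c}"
  shows "S \<noteq> {}" "\<And>x. x \<in> S \<Longrightarrow> 0 \<le> x"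
proof -
  show "S \<noteq> {}" unfolding S_def using coloring_to_nat[where P=P and f=f and g=g and n=n] by blast
  have "0 \<le> entropy_of_map (char_vertices n) (char_dist P g n) c" for c
    by (rule entropy_nonneg[OF finite_char_vertices]) (auto simp: char_dist_nonneg[OF jd] char_dist_total[OF jd])
  then show "0 \<le> x" if "x \<in> S" for x using that unfolding S_def by auto
qed

lemma HC_nonneg:
  fixes P :: "'x::finite \<Rightarrow> 'y::finite \<Rightarrow> real" and f :: "'x \<Rightarrow> 'y \<Rightarrow> 'u" and g :: "'y \<Rightarrow> 'z::finite"
  assumes jd: "is_joint_dist P"
  shows "0 \<le> HC P f g n"
  unfolding chromatic_entropy_def using ent_set_facts[OF jd, where f=f and g=g and n=n]
  by (intro cInf_greatest) auto

lemma HC_le: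
  fixes P :: "'x::finite \<Rightarrow> 'y::finite \<Rightarrow> real" and f :: "'x \<Rightarrow> 'y \<Rightarrow> 'u" and g :: "'y \<Rightarrow> 'z::finite"
  assumes jd: "is_joint_dist P" and col: "is_coloring (char_vertices n) (char_adj P f g n) c"
  shows "HC P f g n \<le> entropy_of_map (char_vertices n) (char_dist P g n) c"
  unfolding chromatic_entropy_def using ent_set_facts(2)[OF jd, where f=f and g=g and n=n] col
  by (intro cInf_lower) (auto simp: bdd_below_def)

lemma HC_approx:
  fixes P :: "'x::finite \<Rightarrow> 'y::finite \<Rightarrow> real" and f :: "'x \<Rightarrow> 'y \<Rightarrow> 'u" and g :: "'y \<Rightarrow> 'z::finite"
  assumes jd: "is_joint_dist P" and e: "e > 0"
  shows "\<exists>c. is_coloring (char_vertices n) (char_adj P f g n) c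
            \<and> entropy_of_map (char_vertices n) (char_dist P g n) c < HC P f g n + e"
proof -
  have "HC P f g n < HC P f g n + e" using e by simp
  then show ?thesis unfolding chromatic_entropy_def
    using cInf_lessD[OF ent_set_facts(1)[OF jd, where f=f and g=g and n=n]] by blast
qed



definition joinv :: "('x list \<times> 'z list) \<times> ('x list \<times> 'z list) \<Rightarrow> 'x list \<times> 'z list" where
  "joinv p = (fst (fst p) @ fst (snd p), snd (fst p) @ snd (snd p))"

definition sp1 :: "nat \<Rightarrow> 'x list \<times> 'z list \<Rightarrow> 'x list \<times> 'z list" where
  "sp1 m v = (take m (fst v), take m (snd v))"

definition sp2 :: "nat \<Rightarrow> 'x list \<times> 'z list \<Rightarrow> 'x list \<times> 'z list" where
  "sp2 m v = (drop m (fst v), drop m (snd v))"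

lemma joinv_image: "char_vertices (m + n) = joinv ` (char_vertices m \<times> char_vertices n)"
proof (intro set_eqI iffI)
  fix v :: "'x list \<times> 'z list" assume "v \<in> char_vertices (m + n)"
  then show "v \<in> joinv ` (char_vertices m \<times> char_vertices n)"
    by (intro image_eqI[of _ _ "(sp1 m v, sp2 m v)"])
       (auto simp: joinv_def sp1_def sp2_def char_vertices_def)
qed (auto simp: joinv_def char_vertices_def)

lemma joinv_inj: "inj_on joinv (char_vertices m \<times> char_vertices n)"
  by (auto simp: inj_on_def joinv_def char_vertices_def)

lemma sp_joinv:
  assumes "p \<in> char_vertices m \<times> char_vertices n"
  shows "sp1 m (joinv p) = fst p" "sp2 m (joinv p) = snd p"
  using assms by (auto simp: joinv_def sp1_def sp2_def char_vertices_def)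

lemma sp_in:
  assumes "v \<in> char_vertices (m + n)"
  shows "sp1 m v \<in> char_vertices m" "sp2 m v \<in> char_vertices n"
  using assms by (auto simp: sp1_def sp2_def char_vertices_def)

lemma adj_split:
  assumes "v \<in> char_vertices (m + n)" "v' \<in> char_vertices (m + n)"
    and adj: "char_adj P f g (m + n) v v'"
  shows "char_adj P f g m (sp1 m v) (sp1 m v') \<or> char_adj P f g n (sp2 m v) (sp2 m v')"
proof -
  from adj obtain ys where s: "snd v = snd v'" and ys: "length ys = m + n"
    "\<forall>t<m + n. g (ys ! t) = snd v ! t"
    "\<forall>t<m + n. P (fst v ! t) (ys ! t) * P (fst v' ! t) (ys ! t) > 0"
    and t: "\<exists>t<m + n. f (fst v ! t) (ys ! t) \<noteq> f (fst v' ! t) (ys ! t)"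
    unfolding char_adj_def by blast
  from t obtain t where t: "t < m + n" "f (fst v ! t) (ys ! t) \<noteq> f (fst v' ! t) (ys ! t)" by blast
  have lens: "length (fst v) = m + n" "length (fst v') = m + n" "length (snd v) = m + n"
    using assms(1,2) by (auto simp: char_vertices_def)
  show ?thesis
  proof (cases "t < m")
    case True
    have "char_adj P f g m (sp1 m v) (sp1 m v')"
      unfolding char_adj_def sp1_def fst_conv snd_conv
    proof (intro conjI exI[of _ "take m ys"])
      show "take m (snd v) = take m (snd v')" using s by simp
      show "length (take m ys) = m" using ys(1) by simp
      show "\<forall>t<m. g (take m ys ! t) = take m (snd v) ! t" using ys(2) by simp
      show "\<forall>t<m. 0 < P (take m (fst v) ! t) (take m ys ! t) * P (take m (fst v') ! t) (take m ys ! t)"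
        using ys(3) by simp
      show "\<exists>t<m. f (take m (fst v) ! t) (take m ys ! t) \<noteq> f (take m (fst v') ! t) (take m ys ! t)"
        using True t(2) by (intro exI[of _ t]) simp
    qed
    then show ?thesis by blast
  next
    case False
    have "char_adj P f g n (sp2 m v) (sp2 m v')"
      unfolding char_adj_def sp2_def fst_conv snd_conv
    proof (intro conjI exI[of _ "drop m ys"])
      show "drop m (snd v) = drop m (snd v')" using s by simp
      show "length (drop m ys) = n" using ys(1) by simp
      show "\<forall>t<n. g (drop m ys ! t) = drop m (snd v) ! t" using ys(1,2) lens by simp
      show "\<forall>t<n. 0 < P (drop m (fst v) ! t) (drop m ys ! t) * P (drop m (fst v') ! t) (drop m ys ! t)"
        using ys(1,3) lens by simp
      show "\<exists>t<n. f (drop m (fst v) ! t) (drop m ys ! t) \<noteq> f (drop m (fst v') ! t) (drop m ys ! t)"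
        using False t ys(1) lens by (intro exI[of _ "t - m"]) simp
    qed
    then show ?thesis by blast
  qed
qed

lemma HC_subadd:
  fixes P :: "'x::finite \<Rightarrow> 'y::finite \<Rightarrow> real" and f :: "'x \<Rightarrow> 'y \<Rightarrow> 'u" and g :: "'y \<Rightarrow> 'z::finite"
  assumes jd: "is_joint_dist P"
  shows "HC P f g (m + n) \<le> HC P f g m + HC P f g n"
proof (rule field_le_epsilon)
  fix e :: real assume e: "e > 0"
  obtain c1 where c1: "is_coloring (char_vertices m) (char_adj P f g m) c1"
    "entropy_of_map (char_vertices m) (char_dist P g m) c1 < HC P f g m + e / 2"
    using HC_approx[where e="e/2" and f=f and g=g and n=m and P=P, OF jd] e by auto
  obtain c2 where c2: "is_coloring (char_vertices n) (char_adj P f g n) c2"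
    "entropy_of_map (char_vertices n) (char_dist P g n) c2 < HC P f g n + e / 2"
    using HC_approx[where e="e/2" and f=f and g=g and n=n and P=P, OF jd] e by auto
  define c where "c v = prod_encode (c1 (sp1 m v), c2 (sp2 m v))" for v :: "'x list \<times> 'z list"
  have col: "is_coloring (char_vertices (m + n)) (char_adj P f g (m + n)) c"
    unfolding is_coloring_def
  proof (intro ballI impI notI)
    fix v v' assume v: "v \<in> char_vertices (m + n)" "v' \<in> char_vertices (m + n)" "c v = c v'"
      and adj: "char_adj P f g (m + n) v v'"
    have e1: "c1 (sp1 m v) = c1 (sp1 m v')" and e2: "c2 (sp2 m v) = c2 (sp2 m v')"
      using v(3) by (auto simp: c_def)
    from adj_split[OF v(1,2) adj] show False
    proof
      assume "char_adj P f g m (sp1 m v) (sp1 m v')"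
      then show False using c1(1) e1 sp_in[OF v(1)] sp_in[OF v(2)] unfolding is_coloring_def by blast
    next
      assume "char_adj P f g n (sp2 m v) (sp2 m v')"
      then show False using c2(1) e2 sp_in[OF v(1)] sp_in[OF v(2)] unfolding is_coloring_def by blast
    qed
  qed
  have "entropy_of_map (char_vertices (m + n)) (char_dist P g (m + n)) c
      = entropy_of_map (char_vertices m \<times> char_vertices n) (char_dist P g (m + n) \<circ> joinv) (c \<circ> joinv)"
    unfolding joinv_image by (rule entropy_reindex[OF joinv_inj])
  also have "\<dots> = entropy_of_map (char_vertices m \<times> char_vertices n)
                    (\<lambda>p. char_dist P g m (fst p) * char_dist P g n (snd p))
                    (\<lambda>p. prod_encode (c1 (fst p), c2 (snd p)))"
  proof (rule entropy_cong)
    fix p :: "('x list \<times> 'z list) \<times> ('x list \<times> 'z list)"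
    assume p: "p \<in> char_vertices m \<times> char_vertices n"
    then show "(c \<circ> joinv) p = prod_encode (c1 (fst p), c2 (snd p))"
      by (simp add: c_def sp_joinv)
    obtain a b where ab: "p = (a, b)" by (cases p)
    then show "(char_dist P g (m + n) \<circ> joinv) p = char_dist P g m (fst p) * char_dist P g n (snd p)"
      using p char_dist_append[of "fst a" m "snd a" "snd b" n P g "fst b"]
      by (auto simp: joinv_def char_vertices_def)
  qed
  also have "\<dots> = entropy_of_map (char_vertices m) (char_dist P g m) c1 + entropy_of_map (char_vertices n) (char_dist P g n) c2"
    by (rule entropy_product) (auto simp: char_dist_nonneg[OF jd] char_dist_total[OF jd])
  finally have "HC P f g (m + n) \<le> entropy_of_map (char_vertices m) (char_dist P g m) c1 + entropy_of_map (char_vertices n) (char_dist P g n) c2"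
    using HC_le[OF jd col] by simp
  then show "HC P f g (m + n) \<le> HC P f g m + HC P f g n + e" using c1(2) c2(2) by simp
qed



lemma pos_mult_nonneg:
  fixes a b :: real
  assumes "a \<ge> 0" "b \<ge> 0" "a * b > 0"
  shows "a > 0" "b > 0"
  using assms by (auto simp: zero_less_mult_iff)

lemma adj_witness:
  fixes P :: "'x::finite \<Rightarrow> 'y::finite \<Rightarrow> real"
  assumes jd: "is_joint_dist P"
    and v: "v \<in> char_vertices n" "v' \<in> char_vertices n"
    and adj: "char_adj P f g n v v'"
  shows "\<exists>ys. length ys = n \<and> map g ys = snd v \<and> snd v' = snd v \<and> Pn P n (fst v) ys > 0 \<and> Pn P n (fst v') ys > 0
            \<and> map2 f (fst v) ys \<noteq> map2 f (fst v') ys"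
proof -
  from adj obtain ys where s: "snd v = snd v'" and ys: "length ys = n"
    "\<forall>t<n. g (ys ! t) = snd v ! t"
    "\<forall>t<n. P (fst v ! t) (ys ! t) * P (fst v' ! t) (ys ! t) > 0"
    and t: "\<exists>t<n. f (fst v ! t) (ys ! t) \<noteq> f (fst v' ! t) (ys ! t)"
    unfolding char_adj_def by blast
  have lens: "length (fst v) = n" "length (fst v') = n" "length (snd v) = n"
    using v by (auto simp: char_vertices_def)
  have nn: "P a b \<ge> 0" for a b using jd by (simp add: is_joint_dist_def)
  have "map g ys = snd v" using ys(1,2) lens by (intro nth_equalityI) auto
  moreover have p1: "P (fst v ! t) (ys ! t) > 0" "P (fst v' ! t) (ys ! t) > 0" if "t < n" for t
    using pos_mult_nonneg[OF nn nn ys(3)[rule_format, OF that]] by auto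
  moreover have "Pn P n (fst v) ys > 0" "Pn P n (fst v') ys > 0"
    using p1 by (simp_all add: Pn_pos_iff[OF jd])
  moreover have "map2 f (fst v) ys \<noteq> map2 f (fst v') ys"
  proof
    assume eq: "map2 f (fst v) ys = map2 f (fst v') ys"
    from t obtain t where "t < n" "f (fst v ! t) (ys ! t) \<noteq> f (fst v' ! t) (ys ! t)" by blast
    moreover have "map2 f (fst v) ys ! t = map2 f (fst v') ys ! t" using eq by simp
    ultimately show False using lens ys(1) by simp
  qed
  ultimately show ?thesis using ys(1) s by (intro exI[of _ ys]) simp
qed

lemma code_lower:
  fixes P :: "'x::finite \<Rightarrow> 'y::finite \<Rightarrow> real" and f :: "'x \<Rightarrow> 'y \<Rightarrow> 'u" and g :: "'y \<Rightarrow> 'z::finite"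
  assumes jd: "is_joint_dist P" and n: "n > 0" and code: "zero_error_code P f g n R enc dec"
  shows "HC P f g n \<le> real n * R"
proof -
  let ?V = "char_vertices n :: ('x list \<times> 'z list) set"
  define e' where "e' v = enc (fst v) (snd v)" for v :: "'x list \<times> 'z list"
  define c where "c v = to_nat (e' v)" for v :: "'x list \<times> 'z list"
  have "e' = (\<lambda>(xs, zs). enc xs zs)" by (simp add: e'_def fun_eq_iff)
  then have setq: "(\<lambda>(xs, zs). enc xs zs) ` {(xs, zs). length xs = n \<and> length zs = n} = e' ` ?V"
    by (simp add: char_vertices_def)
  have pf: "prefix_free (e' ` ?V)" using code setq by (simp add: zero_error_code_def)
  have Req: "R = (1 / real n) * (\<Sum>xs\<in>LL n. \<Sum>ys\<in>LL n. Pn P n xs ys * real (length (enc xs (map g ys))))"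
    using code by (simp add: zero_error_code_def)
  have dec: "\<And>xs ys. length xs = n \<Longrightarrow> length ys = n \<Longrightarrow> Pn P n xs ys > 0 \<Longrightarrow>
      dec ys (enc xs (map g ys)) = map2 f xs ys"
    using code by (simp add: zero_error_code_def)
  have col: "is_coloring ?V (char_adj P f g n) c"
    unfolding is_coloring_def
  proof (intro ballI impI notI)
    fix v v' assume v: "v \<in> ?V" "v' \<in> ?V" "c v = c v'" and adj: "char_adj P f g n v v'"
    then have ee: "enc (fst v) (snd v) = enc (fst v') (snd v')" by (simp add: c_def e'_def)
    obtain ys where ys: "length ys = n" "map g ys = snd v" "snd v' = snd v" "Pn P n (fst v) ys > 0"
      "Pn P n (fst v') ys > 0" "map2 f (fst v) ys \<noteq> map2 f (fst v') ys"
      using adj_witness[OF jd v(1,2) adj] by blast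
    have lens: "length (fst v) = n" "length (fst v') = n" using v by (auto simp: char_vertices_def)
    have "map2 f (fst v) ys = dec ys (enc (fst v) (map g ys))" using dec[OF lens(1) ys(1) ys(4)] by simp
    also have "\<dots> = dec ys (enc (fst v') (map g ys))" using ee ys(2,3) by simp
    also have "\<dots> = map2 f (fst v') ys" using dec[OF lens(2) ys(1) ys(5)] by simp
    finally show False using ys(6) by blast
  qed
  have img: "c ` ?V = to_nat ` (e' ` ?V)" by (auto simp: c_def)
  have kr: "(\<Sum>k\<in>c ` ?V. (1/2::real) ^ length (from_nat k :: bool list)) \<le> 1"
  proof -
    have "(\<Sum>k\<in>c ` ?V. (1/2::real) ^ length (from_nat k :: bool list)) = (\<Sum>w\<in>e' ` ?V. (1/2::real) ^ length w)"
      unfolding img by (simp add: sum.reindex)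
    also have "\<dots> \<le> 1" by (rule kraft[OF _ pf]) simp
    finally show ?thesis .
  qed
  have "HC P f g n \<le> entropy_of_map ?V (char_dist P g n) c" by (rule HC_le[OF jd col])
  also have "\<dots> \<le> (\<Sum>v\<in>?V. char_dist P g n v * real (length (from_nat (c v) :: bool list)))"
    by (rule gibbs[OF finite_char_vertices _ _ kr]) (auto simp: char_dist_nonneg[OF jd] char_dist_total[OF jd])
  also have "\<dots> = (\<Sum>v\<in>?V. char_dist P g n v * real (length (enc (fst v) (snd v))))"
    by (simp add: c_def e'_def)
  also have "\<dots> = (\<Sum>xs\<in>LL n. \<Sum>ys\<in>LL n. Pn P n xs ys * real (length (enc xs (map g ys))))"
    by (rule regroup[symmetric])
  also have "\<dots> = real n * R" using Req n by simp
  finally show ?thesis .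
qed



lemma code_upper:
  fixes P :: "'x::finite \<Rightarrow> 'y::finite \<Rightarrow> real" and f :: "'x \<Rightarrow> 'y \<Rightarrow> 'u" and g :: "'y \<Rightarrow> 'z::finite"
  assumes jd: "is_joint_dist P" and n: "n > 0"
  shows "\<exists>R enc dec. zero_error_code P f g n R enc dec \<and> R \<le> (HC P f g n + 3) / real n"
proof -
  let ?V = "char_vertices n :: ('x list \<times> 'z list) set"
  let ?Q = "char_dist P g n"
  obtain c where c: "is_coloring ?V (char_adj P f g n) c" "entropy_of_map ?V ?Q c < HC P f g n + 1"
    using HC_approx[where e=1 and f=f and g=g and n=n and P=P, OF jd] by auto
  obtain len where len: "(\<Sum>k\<in>c ` ?V. (1/2::real) ^ len k) \<le> 1"
    "(\<Sum>v\<in>?V. ?Q v * real (len (c v))) \<le> entropy_of_map ?V ?Q c + 2"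
    using shannon_code_lengths[OF finite_char_vertices, where Q="?Q" and c=c]
      char_dist_nonneg[OF jd] char_dist_total[OF jd] by blast
  obtain cw where cw: "pf_on (c ` ?V) cw" "\<forall>k\<in>c ` ?V. length (cw k) = len k"
    using kraft_converse[OF _ len(1)] by auto
  define enc where "enc xs zs = cw (c (xs, zs))" for xs :: "'x list" and zs :: "'z list"
  define Pr where "Pr ys w xs \<longleftrightarrow> length xs = n \<and> Pn P n xs ys > 0 \<and> cw (c (xs, map g ys)) = w"
    for ys :: "'y list" and w and xs :: "'x list"
  define dec where "dec ys w = (if \<exists>xs. Pr ys w xs then map2 f (SOME xs. Pr ys w xs) ys else [])"
    for ys :: "'y list" and w
  define R where "R = (1 / real n) * (\<Sum>xs\<in>LL n. \<Sum>ys\<in>LL n. Pn P n xs ys * real (length (enc xs (map g ys))))"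
  have pf: "prefix_free ((\<lambda>(xs, zs). enc xs zs) ` {(xs, zs). length xs = n \<and> length zs = n})"
  proof -
    have "(\<lambda>(xs, zs). enc xs zs) = cw \<circ> c" by (simp add: enc_def fun_eq_iff)
    then have "(\<lambda>(xs, zs). enc xs zs) ` {(xs, zs). length xs = n \<and> length zs = n} = cw ` (c ` ?V)"
      by (simp add: char_vertices_def image_comp)
    then show ?thesis using pf_on_prefix_free[OF cw(1)] by simp
  qed
  have correct: "dec ys (enc xs (map g ys)) = map2 f xs ys"
    if xy: "length xs = n" "length ys = n" "Pn P n xs ys > 0" for xs ys
  proof -
    let ?w = "enc xs (map g ys)"
    have ex: "Pr ys ?w xs" using xy by (simp add: Pr_def enc_def)
    define xs' where "xs' = (SOME xs. Pr ys ?w xs)"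
    have pr': "Pr ys ?w xs'" unfolding xs'_def using ex by (rule someI)
    have dq: "dec ys ?w = map2 f xs' ys" using ex by (auto simp: dec_def xs'_def)
    let ?zs = "map g ys"
    have inV: "(xs, ?zs) \<in> ?V" "(xs', ?zs) \<in> ?V" using xy pr' by (auto simp: char_vertices_def Pr_def)
    have "cw (c (xs', ?zs)) = cw (c (xs, ?zs))" using pr' by (simp add: Pr_def enc_def)
    then have ceq: "c (xs', ?zs) = c (xs, ?zs)"
      using inj_onD[OF pf_on_inj[OF cw(1)]] inV by blast
    have "map2 f xs' ys = map2 f xs ys"
    proof (rule ccontr)
      assume neq: "map2 f xs' ys \<noteq> map2 f xs ys"
      have lxs': "length xs' = n" using pr' by (simp add: Pr_def)
      have "\<exists>t<n. f (xs' ! t) (ys ! t) \<noteq> f (xs ! t) (ys ! t)"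
      proof (rule ccontr)
        assume "\<not> (\<exists>t<n. f (xs' ! t) (ys ! t) \<noteq> f (xs ! t) (ys ! t))"
        then have "map2 f xs' ys = map2 f xs ys" using lxs' xy by (intro nth_equalityI) auto
        then show False using neq by blast
      qed
      moreover have "\<forall>t<n. P (xs' ! t) (ys ! t) * P (xs ! t) (ys ! t) > 0"
        using pr' xy(3) by (auto simp: Pr_def Pn_pos_iff[OF jd])
      moreover have "\<forall>t<n. g (ys ! t) = ?zs ! t" using xy by simp
      ultimately have "char_adj P f g n (xs', ?zs) (xs, ?zs)"
        unfolding char_adj_def using xy(2) by auto
      then show False using c(1) ceq inV unfolding is_coloring_def by blast
    qed
    then show ?thesis using dq by simp
  qed
  have code: "zero_error_code P f g n R enc dec"
    unfolding zero_error_code_def using pf correct by (simp add: R_def)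
  have "real n * R = (\<Sum>xs\<in>LL n. \<Sum>ys\<in>LL n. Pn P n xs ys * real (length (enc xs (map g ys))))"
    using n by (simp add: R_def)
  also have "\<dots> = (\<Sum>v\<in>?V. ?Q v * real (length (enc (fst v) (snd v))))"
    by (rule regroup)
  also have "\<dots> = (\<Sum>v\<in>?V. ?Q v * real (len (c v)))"
    using cw(2) by (intro sum.cong refl) (simp add: enc_def)
  also have "\<dots> \<le> HC P f g n + 3" using len(2) c(2) by simp
  finally have "R \<le> (HC P f g n + 3) / real n" using n by (simp add: field_simps)
  then show ?thesis using code by blast
qed



lemma subadd_mult:
  fixes a :: "nat \<Rightarrow> real"
  assumes sub: "\<And>m n. a (m + n) \<le> a m + a n"
  shows "a (q * k + r) \<le> real q * a k + a r"
proof (induction q)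
  case 0 then show ?case by simp
next
  case (Suc q)
  have "a (Suc q * k + r) = a (k + (q * k + r))" by (simp add: add.assoc)
  also have "\<dots> \<le> a k + a (q * k + r)" by (rule sub)
  also have "\<dots> \<le> a k + (real q * a k + a r)" using Suc by simp
  finally show ?case by (simp add: algebra_simps)
qed

lemma fekete:
  fixes a :: "nat \<Rightarrow> real"
  assumes nn: "\<And>n. a n \<ge> 0" and sub: "\<And>m n. a (m + n) \<le> a m + a n"
  shows "(\<lambda>n. a n / real n) \<longlonglongrightarrow> Inf ((\<lambda>n. a n / real n) ` {0<..})"
proof -
  let ?S = "(\<lambda>n. a n / real n) ` {0<..}"
  let ?L = "Inf ?S"
  have ne: "?S \<noteq> {}" by auto
  have bdd: "bdd_below ?S" using nn by (intro bdd_belowI[of _ 0]) auto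
  have low: "?L \<le> a n / real n" if "n > 0" for n
    using that bdd by (intro cInf_lower) auto
  show ?thesis unfolding LIMSEQ_iff
  proof (intro allI impI)
    fix e :: real assume e: "e > 0"
    have "?L < ?L + e / 2" using e by simp
    from cInf_lessD[OF ne this] obtain k where k: "k > 0" "a k / real k < ?L + e / 2"
      by auto
    define M where "M = Max (a ` {..<k})"
    have M: "a r \<le> M" if "r < k" for r unfolding M_def using that by (intro Max_ge) auto
    have M0: "M \<ge> 0" using M[of 0] nn[of 0] k(1) by simp
    define N where "N = nat \<lceil>2 * M / e\<rceil> + 1"
    show "\<exists>no. \<forall>n\<ge>no. norm (a n / real n - ?L) < e"
    proof (intro exI allI impI)
      fix n assume nN: "n \<ge> N"
      then have npos: "n > 0" by (simp add: N_def)
      define q where "q = n div k"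
      define r where "r = n mod k"
      have nqr: "n = q * k + r" by (simp add: q_def r_def)
      have rk: "r < k" using k(1) by (simp add: r_def)
      have "a n \<le> real q * a k + a r" unfolding nqr by (rule subadd_mult[OF sub])
      also have "\<dots> \<le> real q * a k + M" using M[OF rk] by simp
      finally have an: "a n \<le> real q * a k + M" .
      have "real q * real k \<le> real n" unfolding nqr by simp
      then have "real q * real k * a k \<le> real n * a k"
        using nn[of k] by (intro mult_right_mono) auto
      then have "real q * a k \<le> real n * (a k / real k)"
        using k(1) by (simp add: field_simps)
      then have "a n / real n \<le> a k / real k + M / real n"
        using an npos by (simp add: field_simps)
      moreover have "M / real n < e / 2"
      proof -
        have "2 * M / e < real n" using nN unfolding N_def
          by (metis (no_types, opaque_lifting) add_less_le_mono of_nat_le_iff less_add_one of_nat_ceiling add.commute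
              le_less_trans real_nat_ceiling_ge less_numeral_extra(1) of_nat_add of_nat_1 less_le_trans)
        then have "2 * M < e * real n" using e by (simp add: field_simps)
        then show ?thesis using npos by (simp add: field_simps)
      qed
      ultimately have "a n / real n < ?L + e" using k(2) by linarith
      moreover have "?L \<le> a n / real n" using low[OF npos] .
      ultimately show "norm (a n / real n - ?L) < e" by simp
    qed
  qed
qed



theorem theorem1:
  fixes P :: "'x::finite \<Rightarrow> 'y::finite \<Rightarrow> real"
    and f :: "'x \<Rightarrow> 'y \<Rightarrow> 'u::finite"
    and g :: "'y \<Rightarrow> 'z::finite"
  assumes "is_joint_dist P"
    and "full_marginals P"
  shows "(\<lambda>n. chromatic_entropy (char_vertices n) (char_adj P f g n) (char_dist P g n) / real n)
           \<longlonglongrightarrow> optimal_rate P f g"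
proof -
  note jd = assms(1)
  define a where "a n = HC P f g n" for n
  let ?L = "Inf ((\<lambda>n. a n / real n) ` {0<..})"
  have lim: "(\<lambda>n. a n / real n) \<longlonglongrightarrow> ?L"
    by (rule fekete) (auto simp: a_def HC_nonneg[OF jd] HC_subadd[OF jd])
  define r where "r n = (SOME R. \<exists>enc dec. zero_error_code P f g n R enc dec \<and> R \<le> (a n + 3) / real n)" for n
  have r: "\<exists>enc dec. zero_error_code P f g n (r n) enc dec \<and> r n \<le> (a n + 3) / real n" if "n > 0" for n
    unfolding r_def a_def using someI_ex[OF code_upper[OF jd that, where f=f and g=g]] by blast
  have lowr: "a n / real n \<le> R" if "n > 0" "zero_error_code P f g n R enc dec" for n R enc dec
    using code_lower[OF jd that] that(1) by (simp add: a_def field_simps)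
  have rlim: "r \<longlonglongrightarrow> ?L"
  proof (rule tendsto_sandwich[OF _ _ lim])
    show "\<forall>\<^sub>F n in sequentially. a n / real n \<le> r n"
      using eventually_gt_at_top[of 0] by eventually_elim (use r lowr in blast)
    show "\<forall>\<^sub>F n in sequentially. r n \<le> a n / real n + 3 / real n"
      using eventually_gt_at_top[of 0] by eventually_elim (use r in \<open>auto simp: add_divide_distrib\<close>)
    show "(\<lambda>n. a n / real n + 3 / real n) \<longlonglongrightarrow> ?L"
      using tendsto_add[OF lim lim_const_over_n[of 3]] by simp
  qed
  have L0: "?L \<ge> 0"
    by (intro cInf_greatest) (auto simp: a_def HC_nonneg[OF jd])
  have ach: "achievable_rate P f g ?L"
    unfolding achievable_rate_def using r rlim by blast
  have ge: "?L \<le> R" if "R \<in> {R. R \<ge> 0 \<and> achievable_rate P f g R}" for R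
  proof -
    from that obtain r' where r': "\<forall>n>0. \<exists>enc dec. zero_error_code P f g n (r' n) enc dec" "r' \<longlonglongrightarrow> R"
      unfolding achievable_rate_def by blast
    have "\<forall>\<^sub>F n in sequentially. a n / real n \<le> r' n"
      using eventually_gt_at_top[of 0] by eventually_elim (use r'(1) lowr in blast)
    then show ?thesis using tendsto_le[OF _ r'(2) lim] by simp
  qed
  have "optimal_rate P f g = ?L"
    unfolding optimal_rate_def by (rule cInf_eq_minimum) (use L0 ach ge in auto)
  then show ?thesis using lim by (simp add: a_def)
qed

end
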